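(* Let $\beta<0$, $G_\beta(u)=-u^\beta$, $L\in\mathbb{N}$, $d>0$ and $u_0\in\mathcal{P}_{L,d}$. For $\delta>0$ let $u_{0,\delta}=u_0\vee\delta$ and let $u_\delta$ be a solution of $\partial_tu=\Delta G_\beta(u)$, $u(0)=u_{0,\delta}$, satisfying $\delta\le u_\delta\le\|u_{0,\delta}\|_\infty$. Then there exist $c=c(\beta,L,d)>0$ and $t^*=t^*(\beta,L,d)>0$ such that $u_\delta(t,k)\ge c\,t^{\frac1{1-\beta}}$ for all $0\le t\le t^*$ and $k\in\mathbb{Z}$.
   Context: $\Delta v(k)=v(k-1)-2v(k)+v(k+1)$. For $u\in\ell^\infty_+(\mathbb{Z})$, $\sigma_+(u,k,d)=\inf\{l>k:u(l)\ge d\}$ and $\mathcal{P}_{L,d}=\{u\in\ell^\infty_+(\mathbb{Z}):\sup_k(\sigma_+(u,k,d)-k)\le L\}$. A solution: $u\in C^0([0,\infty);\ell^\infty_+(\mathbb{Z}))$ with the given initial datum, each $u(\cdot,k)\in C^1((0,\infty);(0,\infty))$ satisfying the equation pointwise. (Such $u_\delta$ exist.) *)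

theory Defs
  imports "HOL-Analysis.Analysis"
begin

definition linf_plus :: "(int \<Rightarrow> real) set" where
  "linf_plus = {u. bounded (range u) \<and> (\<forall>k. 0 \<le> u k)}"

definition supnorm :: "(int \<Rightarrow> real) \<Rightarrow> real" where
  "supnorm u = (SUP k. \<bar>u k\<bar>)"

text \<open>sigma_+(u,k,d) = inf {l > k. u l >= d}, with inf of the empty set = +infinity\<close>
definition sigma_plus :: "(int \<Rightarrow> real) \<Rightarrow> int \<Rightarrow> real \<Rightarrow> ereal" where
  "sigma_plus u k d = Inf {ereal (real_of_int l) | l. l > k \<and> u l \<ge> d}"

definition P_set :: "nat \<Rightarrow> real \<Rightarrow> (int \<Rightarrow> real) set" where
  "P_set L d = {u \<in> linf_plus.
     (SUP k. sigma_plus u k d - ereal (real_of_int k)) \<le> ereal (real L)}"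

definition G_beta :: "real \<Rightarrow> real \<Rightarrow> real" where
  "G_beta \<beta> v = - (v powr \<beta>)"

definition dlap :: "(int \<Rightarrow> real) \<Rightarrow> int \<Rightarrow> real" where
  "dlap v k = v (k - 1) - 2 * v k + v (k + 1)"

definition is_solution :: "real \<Rightarrow> (int \<Rightarrow> real) \<Rightarrow> (real \<Rightarrow> int \<Rightarrow> real) \<Rightarrow> bool" where
  "is_solution \<beta> w u \<longleftrightarrow>
     (\<forall>t\<ge>0. u t \<in> linf_plus)
   \<and> (\<forall>t\<ge>0. \<forall>\<epsilon>>0. \<exists>\<eta>>0. \<forall>s\<ge>0. \<bar>s - t\<bar> < \<eta> \<longrightarrow> supnorm (\<lambda>k. u s k - u t k) < \<epsilon>)
   \<and> u 0 = w
   \<and> (\<forall>k. \<forall>t>0. u t k > 0)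
   \<and> (\<forall>k. \<forall>t>0. ((\<lambda>s. u s k) has_real_derivative dlap (\<lambda>j. G_beta \<beta> (u t j)) k) (at t))
   \<and> (\<forall>k. continuous_on {0<..} (\<lambda>t. deriv (\<lambda>s. u s k) t))"

end

theory Submission
  imports Defs
begin

lemma powr_lip:
  fixes b m x y :: real
  assumes "b \<le> 0" "0 < m" "m \<le> x" "x \<le> y"
  shows "x powr b \<le> y powr b + (-b) * m powr (b-1) * (y - x)"
proof (cases "x = y")
  case True then show ?thesis by simp
next
  case False
  then have xy: "x < y" using assms by simp
  have "\<And>z. x \<le> z \<Longrightarrow> z \<le> y \<Longrightarrow> ((\<lambda>z. z powr b) has_real_derivative b * z powr (b - 1)) (at z)"
    using assms by (intro has_real_derivative_powr) auto
  from MVT2[OF xy this] obtain z where z: "x < z" "z < y"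
    "y powr b - x powr b = (y - x) * (b * z powr (b - 1))" by blast
  have "z powr (b-1) \<le> m powr (b-1)"
    using assms z by (intro powr_mono2') auto
  then have "(-b) * z powr (b-1) \<le> (-b) * m powr (b-1)"
    by (rule mult_left_mono) (use assms in auto)
  then have "(y - x) * ((-b) * z powr (b-1)) \<le> (y - x) * ((-b) * m powr (b-1))"
    by (rule mult_left_mono) (use xy in auto)
  then show ?thesis using z(3) by (simp add: algebra_simps)
qed

lemma dlap_G:
  "dlap (\<lambda>j. G_beta b (v j)) k = 2 * v k powr b - v (k-1) powr b - v (k+1) powr b"
  by (simp add: dlap_def G_beta_def)

lemma Pset_site:
  assumes "u0 \<in> P_set L d"
  shows "\<exists>l. k < l \<and> l \<le> k + int L \<and> d \<le> u0 l"
proof (rule ccontr)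
  assume H: "\<not> ?thesis"
  let ?S = "{ereal (real_of_int l) | l. l > k \<and> u0 l \<ge> d}"
  have "ereal (real_of_int (k + int L + 1)) \<le> Inf ?S"
  proof (rule Inf_greatest)
    fix x assume "x \<in> ?S"
    then obtain l where l: "x = ereal (real_of_int l)" "l > k" "u0 l \<ge> d" by blast
    from H l(2,3) have "\<not> l \<le> k + int L" by blast
    then have "l \<ge> k + int L + 1" by simp
    then show "ereal (real_of_int (k + int L + 1)) \<le> x" using l by simp
  qed
  then have s: "ereal (real_of_int (k + int L + 1)) \<le> sigma_plus u0 k d"
    by (simp add: sigma_plus_def)
  have "sigma_plus u0 k d - ereal (real_of_int k) \<le> (SUP k. sigma_plus u0 k d - ereal (real_of_int k))"
    by (rule SUP_upper) simp
  also have "\<dots> \<le> ereal (real L)" using assms by (simp add: P_set_def)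
  finally have a: "sigma_plus u0 k d - ereal (real_of_int k) \<le> ereal (real L)" .
  have "ereal (real_of_int (k + int L + 1)) - ereal (real_of_int k) \<le> sigma_plus u0 k d - ereal (real_of_int k)"
    using s by (intro ereal_minus_mono) auto
  with a have "ereal (real_of_int (k + int L + 1)) - ereal (real_of_int k) \<le> ereal (real L)" by order
  then show False by simp
qed


lemma profile:
  fixes P :: "int \<Rightarrow> bool" and L :: nat
  assumes H: "\<And>k. \<exists>l. k < l \<and> l \<le> k + int L \<and> P l"
  shows "\<exists>q::int\<Rightarrow>real. (\<forall>j. 1/2 \<le> q j \<and> q j \<le> 1) \<and>
     (\<forall>j. \<not> P j \<longrightarrow> 2 * q j - q (j-1) - q (j+1) \<ge> 2 * (1/(2*(real L+1)^2)))"
proof -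
  define A where "A j = Max {l. P l \<and> j - int L < l \<and> l \<le> j}" for j
  define B where "B j = Min {l. P l \<and> j \<le> l \<and> l < j + int L}" for j
  have finA: "finite {l. P l \<and> j - int L < l \<and> l \<le> j}" for j
    by (rule finite_subset[of _ "{j - int L<..j}"]) auto
  have finB: "finite {l. P l \<and> j \<le> l \<and> l < j + int L}" for j
    by (rule finite_subset[of _ "{j..<j + int L}"]) auto
  have neA: "{l. P l \<and> j - int L < l \<and> l \<le> j} \<noteq> {}" for j
    using H[of "j - int L"] by auto
  have neB: "{l. P l \<and> j \<le> l \<and> l < j + int L} \<noteq> {}" for j
  proof -
    obtain l where "j - 1 < l" "l \<le> j - 1 + int L" "P l" using H[of "j - 1"] by blast
    then have "l \<in> {l. P l \<and> j \<le> l \<and> l < j + int L}" by auto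
    then show ?thesis by blast
  qed
  have A1: "P (A j) \<and> A j \<le> j \<and> j - int L < A j" for j
    using Max_in[OF finA neA, of j] unfolding A_def by auto
  have A2: "l \<le> A j" if "P l" "l \<le> j" for l j
  proof (cases "j - int L < l")
    case True then show ?thesis unfolding A_def using that by (intro Max_ge[OF finA]) auto
  next
    case False then show ?thesis using A1[of j] by auto
  qed
  have B1: "P (B j) \<and> j \<le> B j \<and> B j < j + int L" for j
    using Min_in[OF finB neB, of j] unfolding B_def by auto
  have B2: "B j \<le> l" if "P l" "j \<le> l" for l j
  proof (cases "l < j + int L")
    case True then show ?thesis unfolding B_def using that by (intro Min_le[OF finB]) auto
  next
    case False then show ?thesis using B1[of j] by auto
  qed
  have PAB: "A i = i \<and> B i = i" if "P i" for i
    using A1[of i] A2[of i i] B1[of i] B2[of i i] that by auto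
  have gap: "B j - A j \<le> int L" for j
  proof (cases "P j")
    case True then show ?thesis using PAB by simp
  next
    case False
    obtain l where l: "A j < l" "l \<le> A j + int L" "P l" using H[of "A j"] by blast
    have "j \<le> l" using A2[of l j] l by force
    then have "B j \<le> l" using B2 l by blast
    then show ?thesis using l by simp
  qed
  have sucN: "A (j+1) = A j \<and> B (j+1) = B j" if "\<not> P j" "\<not> P (j+1)" for j
  proof -
    have "A j \<le> A (j+1)" using A1[of j] A2[of "A j" "j+1"] by auto
    moreover have "A (j+1) \<noteq> j + 1" using A1[of "j+1"] that by auto
    then have "A (j+1) \<le> A j" using A1[of "j+1"] A2[of "A (j+1)" j] by auto
    moreover have "B j \<noteq> j" using B1[of j] that by auto
    then have "B (j+1) \<le> B j" using B1[of j] B2[of "B j" "j+1"] by auto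
    moreover have "B j \<le> B (j+1)" using B1[of "j+1"] B2[of "B (j+1)" j] by auto
    ultimately show ?thesis by auto
  qed
  have sucP: "B j = j + 1" if "\<not> P j" "P (j+1)" for j
  proof -
    have "B j \<noteq> j" using B1[of j] that by auto
    then show ?thesis using B1[of j] B2[of "j+1" j] that by auto
  qed
  have predP: "A j = j - 1" if "\<not> P j" "P (j-1)" for j
  proof -
    have "A j \<noteq> j" using A1[of j] that by auto
    then show ?thesis using A1[of j] A2[of "j-1" j] that by auto
  qed
  define \<eta> where "\<eta> = 1/(2*(real L+1)^2)"
  have eta0: "0 < \<eta>" unfolding \<eta>_def by (simp add: add_pos_nonneg)
  define q where "q j = 1/2 + \<eta> * real_of_int (j - A j) * real_of_int (B j - j)" for j
  have "1/2 \<le> q j \<and> q j \<le> 1" for j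
  proof -
    have x0: "0 \<le> j - A j" "j - A j \<le> int L" using A1[of j] by auto
    have y0: "0 \<le> B j - j" "B j - j \<le> int L" using B1[of j] gap[of j] A1[of j] by auto
    have p0: "0 \<le> real_of_int (j - A j) * real_of_int (B j - j)" using x0 y0 by simp
    have "real_of_int (j - A j) * real_of_int (B j - j) \<le> real L * real L"
      using x0 y0 by (intro mult_mono) auto
    also have "\<dots> \<le> (real L + 1)^2" by (simp add: power2_eq_square mult_mono)
    finally have p1: "real_of_int (j - A j) * real_of_int (B j - j) \<le> (real L + 1)^2" .
    have "\<eta> * (real_of_int (j - A j) * real_of_int (B j - j)) \<le> \<eta> * (real L + 1)^2"
      using p1 eta0 by (intro mult_left_mono) auto
    also have "\<eta> * (real L + 1)^2 = 1/2" unfolding \<eta>_def by (simp add: field_simps)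
    finally have e1: "\<eta> * (real_of_int (j - A j) * real_of_int (B j - j)) \<le> 1/2" .
    have e2: "0 \<le> \<eta> * (real_of_int (j - A j) * real_of_int (B j - j))" using p0 eta0 by simp
    have "q j = 1/2 + \<eta> * (real_of_int (j - A j) * real_of_int (B j - j))"
      unfolding q_def by (simp only: mult.assoc)
    then show ?thesis using e1 e2 by linarith
  qed
  moreover have "2 * q j - q (j-1) - q (j+1) \<ge> 2 * \<eta>" if nP: "\<not> P j" for j
  proof -
    have qp: "q (j+1) = 1/2 + \<eta> * real_of_int (j + 1 - A j) * real_of_int (B j - (j+1))"
    proof (cases "P (j+1)")
      case True then show ?thesis using sucP[OF nP True] PAB[OF True] unfolding q_def by simp
    next
      case False then show ?thesis using sucN[OF nP False] unfolding q_def by simp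
    qed
    have qm: "q (j-1) = 1/2 + \<eta> * real_of_int (j - 1 - A j) * real_of_int (B j - (j-1))"
    proof (cases "P (j-1)")
      case True then show ?thesis using predP[OF nP True] PAB[OF True] unfolding q_def by simp
    next
      case False
      have "A (j - 1) = A j \<and> B (j - 1) = B j" using sucN[of "j-1"] False nP by simp
      then show ?thesis unfolding q_def by simp
    qed
    show ?thesis unfolding qp qm by (simp add: q_def algebra_simps)
  qed
  ultimately show ?thesis unfolding \<eta>_def by blast
qed


lemma sup_ge:
  fixes f g :: "int \<Rightarrow> real"
  assumes "bounded (range f)" "bounded (range g)"
  shows "\<bar>f k - g k\<bar> \<le> supnorm (\<lambda>k. f k - g k)"
proof -
  obtain B1 where B1: "\<forall>x\<in>range f. norm x \<le> B1" using assms(1) Elementary_Metric_Spaces.bounded_iff by blast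
  obtain B2 where B2: "\<forall>x\<in>range g. norm x \<le> B2" using assms(2) Elementary_Metric_Spaces.bounded_iff by blast
  have "\<bar>f i - g i\<bar> \<le> B1 + B2" for i
    using B1 B2 by (auto intro!: abs_triangle_ineq4[THEN order_trans] add_mono)
  then have "bdd_above (range (\<lambda>k. \<bar>f k - g k\<bar>))" by (auto intro!: bdd_aboveI)
  then show ?thesis unfolding supnorm_def by (intro cSUP_upper) auto
qed

lemma core:
  fixes \<beta> \<alpha> d c \<eta> q0 F ts \<delta> t :: real and q w0 :: "int \<Rightarrow> real"
    and u :: "real \<Rightarrow> int \<Rightarrow> real"
  assumes beta: "\<beta> < 0" and alpha: "\<alpha> = 1/(1-\<beta>)" and d0: "0 < d" and c0: "0 < c"
    and eta0: "0 < \<eta>" and q00: "0 < q0" and Fdef: "F = q0 powr (1/\<beta>)"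
    and qb: "\<forall>j. q0 \<le> q j \<and> q j \<le> 1"
    and qc: "\<forall>j. w0 j < d \<longrightarrow> 2*q j - q (j-1) - q (j+1) \<ge> 2*\<eta>"
    and cF: "c * \<alpha> * F \<le> \<eta> * c powr \<beta>"
    and ts1: "c * F * ts powr \<alpha> \<le> d/4" and ts2: "2 * (c/2) powr \<beta> * ts powr \<alpha> / \<alpha> \<le> d/2"
    and sol: "is_solution \<beta> w0 u" and low: "\<forall>s\<ge>0. \<forall>k. \<delta> \<le> u s k" and del: "0 < \<delta>"
    and t0: "0 < t" and tts: "t \<le> ts"
  shows "c * (t powr \<alpha> * q k powr (1/\<beta>)) \<le> u t k"
proof (rule ccontr)
  assume contra: "\<not> ?thesis"
  have u0eq: "u 0 = w0" using sol unfolding is_solution_def by blast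
  have linf: "\<And>s. s \<ge> 0 \<Longrightarrow> u s \<in> linf_plus" using sol unfolding is_solution_def by blast
  have contall: "\<forall>t\<ge>0. \<forall>\<epsilon>>0. \<exists>\<eta>>0. \<forall>s\<ge>0. \<bar>s - t\<bar> < \<eta> \<longrightarrow> supnorm (\<lambda>k. u s k - u t k) < \<epsilon>"
    using sol unfolding is_solution_def by blast
  have contz: "\<forall>\<epsilon>>0. \<exists>\<eta>>0. \<forall>s\<ge>0. \<bar>s - 0\<bar> < \<eta> \<longrightarrow> supnorm (\<lambda>k. u s k - u 0 k) < \<epsilon>"
    using contall[rule_format, of 0] by simp
  have om: "1 < 1 - \<beta>" using beta by simp
  have al0: "0 < \<alpha>" "\<alpha> < 1" unfolding alpha using om by (auto simp: divide_less_eq)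
  have alb: "\<alpha> * \<beta> = \<alpha> - 1" using beta alpha by (auto simp: field_simps)
  define f where "f j = q j powr (1/\<beta>)" for j
  have qpos: "0 < q j" for j using qb q00 by (meson less_le_trans)
  have f1: "1 \<le> f j" for j
  proof -
    have "1 powr (1/\<beta>) \<le> q j powr (1/\<beta>)" using qb qpos beta by (intro powr_mono2') auto
    then show ?thesis unfolding f_def by simp
  qed
  have fF: "f j \<le> F" for j unfolding f_def Fdef using qb q00 beta by (intro powr_mono2') auto
  have fb: "f j powr \<beta> = q j" for j
    unfolding f_def powr_powr using beta qpos[of j] by simp
  define D where "D j s = 2 * u s j powr \<beta> - u s (j-1) powr \<beta> - u s (j+1) powr \<beta>" for j s
  have uder: "((\<lambda>s. u s j) has_real_derivative D j s) (at s)" if "0 < s" for j s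
    using sol that unfolding is_solution_def D_def dlap_G by blast
  define w where "w j s = c * (s powr \<alpha> * f j)" for j s
  define w' where "w' j s = c * (\<alpha> * s powr (\<alpha> - 1) * f j)" for j s
  have wder: "(w j has_real_derivative w' j s) (at s)" if "0 < s" for j s
  proof -
    have "((\<lambda>s. s powr \<alpha>) has_real_derivative \<alpha> * s powr (\<alpha>-1)) (at s)"
      using that by (rule has_real_derivative_powr)
    from DERIV_cmult[OF DERIV_cmult_right[OF this, of "f j"], of c]
    show ?thesis unfolding w_def w'_def by simp
  qed
  define g where "g j s = u s j - w j s" for j s
  have gder: "(g j has_real_derivative D j s - w' j s) (at s)" if "0 < s" for j s
    unfolding g_def[abs_def] using uder[OF that] wder[OF that] by (intro DERIV_diff) auto
  have upos: "0 < u s j" if "0 \<le> s" for s j using low del that by (meson less_le_trans)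
  have ubeta: "0 < u s j powr \<beta> \<and> u s j powr \<beta> \<le> \<delta> powr \<beta>" if "0 \<le> s" for s j
  proof
    show "0 < u s j powr \<beta>" using upos[OF that, of j] by simp
    have "\<delta> \<le> u s j" using low that by blast
    then show "u s j powr \<beta> \<le> \<delta> powr \<beta>" using del beta by (intro powr_mono2') auto
  qed
  have Dbd: "\<bar>D j s\<bar> \<le> 2 * \<delta> powr \<beta>" if "0 \<le> s" for j s
    using ubeta[OF that, of j] ubeta[OF that, of "j-1"] ubeta[OF that, of "j+1"]
    unfolding D_def abs_le_iff by linarith
  have gkt: "g k t < 0" using contra unfolding g_def w_def f_def by simp
  have F1: "1 \<le> F" using f1[of 0] fF[of 0] by simp
  define s0 where "s0 = (\<delta>/(2*c*F)) powr (1/\<alpha>)"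
  have s0pos: "0 < s0" unfolding s0_def using del c0 F1 by simp
  have s0a: "s0 powr \<alpha> = \<delta>/(2*c*F)" unfolding s0_def powr_powr using al0 del c0 F1 by simp
  have wle: "w j s \<le> c * (s powr \<alpha> * F)" if "0 \<le> s" for j s
    unfolding w_def using c0 fF[of j] by (intro mult_left_mono) (auto intro: mult_left_mono)
  have wge: "c * s powr \<alpha> \<le> w j s" if "0 \<le> s" for j s
  proof -
    have "s powr \<alpha> * 1 \<le> s powr \<alpha> * f j" using f1[of j] by (intro mult_left_mono) auto
    then show ?thesis unfolding w_def using c0 by (intro mult_left_mono) auto
  qed
  have gsmall: "0 < g j s" if "0 \<le> s" "s \<le> s0" for j s
  proof -
    have "s powr \<alpha> \<le> s0 powr \<alpha>" using that al0 by (intro powr_mono2) auto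
    then have "c * (s powr \<alpha> * F) \<le> c * (s0 powr \<alpha> * F)" using c0 F1 by (intro mult_left_mono) auto
    also have "\<dots> = \<delta>/2" unfolding s0a using c0 F1 by (simp add: field_simps)
    finally have "w j s \<le> \<delta>/2" using wle[OF that(1), of j] by linarith
    moreover have "\<delta> \<le> u s j" using low that by blast
    ultimately show ?thesis unfolding g_def using del by linarith
  qed
  define Z where "Z = {s. 0 \<le> s \<and> s \<le> t \<and> (\<exists>i. g i s < 0)}"
  have tZ: "t \<in> Z" unfolding Z_def using t0 gkt by auto
  have Zne: "Z \<noteq> {}" using tZ by blast
  have Zbdd: "bdd_below Z" unfolding Z_def by (auto intro: bdd_belowI[of _ 0])
  define T where "T = Inf Z"
  have Zs0: "s0 < s" if "s \<in> Z" for s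
  proof (rule ccontr)
    assume "\<not> s0 < s"
    then show False using that gsmall unfolding Z_def by (auto simp: not_less) (meson less_asym')
  qed
  have Ts0: "s0 \<le> T" unfolding T_def using Zne Zs0 by (intro cInf_greatest) (auto intro: less_imp_le)
  have Tpos: "0 < T" using s0pos Ts0 by linarith
  have Tt: "T \<le> t" unfolding T_def using tZ Zbdd by (rule cInf_lower)
  have gbefore: "0 \<le> g i s" if "0 \<le> s" "s < T" for i s
  proof (rule ccontr)
    assume "\<not> 0 \<le> g i s"
    then have "g i s < 0" by simp
    then have "s \<in> Z" unfolding Z_def using that Tt by auto
    then have "T \<le> s" unfolding T_def using Zbdd by (rule cInf_lower)
    then show False using that by simp
  qed
  define \<Lambda> where "\<Lambda> = 2 * \<delta> powr \<beta> + c * \<alpha> * (T/2) powr (\<alpha> - 1) * F"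
  have Lpos: "0 < \<Lambda>" unfolding \<Lambda>_def using del c0 al0 F1 Tpos
    by (intro add_pos_nonneg) auto
  have w'bd: "\<bar>w' i z\<bar> \<le> c * \<alpha> * (T/2) powr (\<alpha> - 1) * F" if "T/2 \<le> z" for i z
  proof -
    have zp: "z powr (\<alpha>-1) \<le> (T/2) powr (\<alpha>-1)" using that Tpos al0 by (intro powr_mono2') auto
    have "\<alpha> * z powr (\<alpha>-1) * f i \<le> \<alpha> * (T/2) powr (\<alpha>-1) * F"
      using zp fF[of i] f1[of i] al0 by (intro mult_mono) auto
    then have "c * (\<alpha> * z powr (\<alpha>-1) * f i) \<le> c * (\<alpha> * (T/2) powr (\<alpha>-1) * F)"
      using c0 by (intro mult_left_mono) auto
    moreover have "0 \<le> w' i z" unfolding w'_def using c0 al0 f1[of i] by simp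
    ultimately show ?thesis unfolding w'_def by (simp add: mult.assoc)
  qed
  have Lip: "\<bar>g i \<tau>2 - g i \<tau>1\<bar> \<le> \<Lambda> * (\<tau>2 - \<tau>1)" if "T/2 \<le> \<tau>1" "\<tau>1 \<le> \<tau>2" for i \<tau>1 \<tau>2
  proof (cases "\<tau>1 = \<tau>2")
    case True then show ?thesis by simp
  next
    case False
    then have lt: "\<tau>1 < \<tau>2" using that by simp
    have "\<And>z. \<tau>1 \<le> z \<Longrightarrow> z \<le> \<tau>2 \<Longrightarrow> (g i has_real_derivative D i z - w' i z) (at z)"
      using that Tpos by (intro gder) auto
    from MVT2[OF lt this] obtain z where z: "\<tau>1 < z" "z < \<tau>2"
      "g i \<tau>2 - g i \<tau>1 = (\<tau>2 - \<tau>1) * (D i z - w' i z)" by blast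
    have "\<bar>D i z - w' i z\<bar> \<le> \<Lambda>"
      using Dbd[of z i] w'bd[of z i] z that Tpos unfolding \<Lambda>_def abs_le_iff by linarith
    then have "\<bar>\<tau>2 - \<tau>1\<bar> * \<bar>D i z - w' i z\<bar> \<le> \<bar>\<tau>2 - \<tau>1\<bar> * \<Lambda>" by (intro mult_left_mono) auto
    then show ?thesis using z(3) lt by (simp add: abs_mult mult.commute)
  qed
  define wmin where "wmin = c * (T/2) powr \<alpha>"
  have wminpos: "0 < wmin" unfolding wmin_def using c0 Tpos by simp
  define K where "K = -\<beta> * (wmin/2) powr (\<beta>-1)"
  have K0: "0 \<le> K" unfolding K_def using beta by (intro mult_nonneg_nonneg) auto
  define M where "M = t powr (\<alpha>-1) * \<eta> * c powr \<beta>"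
  have Mpos: "0 < M" unfolding M_def using t0 eta0 c0 by simp
  define e0 where "e0 = min (wmin/2) (min (d/8) (M/(8*(K+1))))"
  have e0pos: "0 < e0" unfolding e0_def using wminpos d0 Mpos K0 by simp
  define \<epsilon> where "\<epsilon> = min (T/2) (e0/(2*\<Lambda>))"
  have epos: "0 < \<epsilon>" unfolding \<epsilon>_def using Tpos e0pos Lpos by simp
  define e where "e = 2 * \<Lambda> * \<epsilon>"
  have e_pos: "0 < e" unfolding e_def using Lpos epos by simp
  have ee0: "e \<le> e0"
  proof -
    have "\<epsilon> \<le> e0/(2*\<Lambda>)" unfolding \<epsilon>_def by simp
    then have "2 * \<Lambda> * \<epsilon> \<le> 2 * \<Lambda> * (e0/(2*\<Lambda>))" using Lpos by (intro mult_left_mono) auto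
    then show ?thesis unfolding e_def using Lpos by simp
  qed
  have e1: "e \<le> wmin/2" "e \<le> d/8" "e \<le> M/(8*(K+1))" using ee0 unfolding e0_def by auto
  define a where "a = T - \<epsilon>"
  have aT: "T/2 \<le> a" "a < T" unfolding a_def \<epsilon>_def using epos unfolding \<epsilon>_def by auto
  have "Inf Z < T + \<epsilon>" using epos unfolding T_def by simp
  then obtain s where sZ: "s \<in> Z" "s < T + \<epsilon>" using cInf_less_iff[OF Zne Zbdd] by blast
  have Ts: "T \<le> s" unfolding T_def using sZ(1) Zbdd by (rule cInf_lower)
  obtain j where gjs: "g j s < 0" and st: "s \<le> t" using sZ(1) unfolding Z_def by blast
  have gja: "0 \<le> g j a" using aT Tpos by (intro gbefore) auto
  have as: "a < s" using aT Ts by simp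
  have "\<And>z. a \<le> z \<Longrightarrow> z \<le> s \<Longrightarrow> (g j has_real_derivative D j z - w' j z) (at z)"
    using aT Tpos by (intro gder) auto
  from MVT2[OF as this] obtain \<sigma> where sig: "a < \<sigma>" "\<sigma> < s"
    "g j s - g j a = (s - a) * (D j \<sigma> - w' j \<sigma>)" by blast
  have gneg: "D j \<sigma> - w' j \<sigma> < 0"
  proof (rule ccontr)
    assume "\<not> ?thesis"
    then have "0 \<le> (s - a) * (D j \<sigma> - w' j \<sigma>)" using as by simp
    then show False using sig(3) gjs gja by linarith
  qed
  have sa2: "s - a < 2 * \<epsilon>" using sZ(2) unfolding a_def by simp
  have gall: "- e \<le> g i \<sigma>" for i
  proof -
    have "0 \<le> g i a" using aT Tpos by (intro gbefore) auto
    moreover have "\<bar>g i \<sigma> - g i a\<bar> \<le> \<Lambda> * (\<sigma> - a)" using aT sig by (intro Lip) auto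
    moreover have "\<Lambda> * (\<sigma> - a) \<le> \<Lambda> * (2 * \<epsilon>)" using Lpos sig sa2 by (intro mult_left_mono) auto
    ultimately show ?thesis unfolding e_def abs_le_iff by linarith
  qed
  have gj: "g j \<sigma> \<le> e"
  proof -
    have "\<bar>g j s - g j \<sigma>\<bar> \<le> \<Lambda> * (s - \<sigma>)" using aT sig by (intro Lip) auto
    moreover have "\<Lambda> * (s - \<sigma>) \<le> \<Lambda> * (2 * \<epsilon>)" using Lpos sig sa2 by (intro mult_left_mono) auto
    ultimately show ?thesis using gjs unfolding e_def abs_le_iff by linarith
  qed
  have sigt: "\<sigma> \<le> t" using sig st by simp
  have sigpos: "0 < \<sigma>" using sig aT Tpos by simp
  have ulow: "c/2 * \<tau> powr \<alpha> \<le> u \<tau> i" if "0 < \<tau>" "\<tau> \<le> \<sigma>" for \<tau> i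
  proof (cases "\<tau> < T")
    case True
    then have "0 \<le> g i \<tau>" using that by (intro gbefore) auto
    then have "c * \<tau> powr \<alpha> \<le> u \<tau> i" using wge[of \<tau> i] that unfolding g_def by simp
    moreover have "0 \<le> c * \<tau> powr \<alpha>" using c0 by simp
    ultimately show ?thesis by simp
  next
    case False
    then have "a \<le> \<tau>" using aT by simp
    then have "wmin \<le> c * \<tau> powr \<alpha>" unfolding wmin_def using c0 aT Tpos al0
      by (intro mult_left_mono powr_mono2) auto
    moreover have "- e \<le> g i \<tau>"
    proof -
      have "0 \<le> g i a" using aT Tpos by (intro gbefore) auto
      moreover have "\<bar>g i \<tau> - g i a\<bar> \<le> \<Lambda> * (\<tau> - a)" using aT \<open>a \<le> \<tau>\<close> by (intro Lip) auto
      moreover have "\<Lambda> * (\<tau> - a) \<le> \<Lambda> * (2 * \<epsilon>)" using Lpos that sig sa2 \<open>a \<le> \<tau>\<close> by (intro mult_left_mono) auto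
      ultimately show ?thesis unfolding e_def abs_le_iff by linarith
    qed
    moreover have "c * \<tau> powr \<alpha> \<le> w i \<tau>" using wge that by simp
    ultimately show ?thesis using e1(1) unfolding g_def by linarith
  qed
  show False
  proof (cases "d \<le> w0 j")
    case True
    define C2 where "C2 = 2 * (c/2) powr \<beta> / \<alpha>"
    have C2pos: "0 \<le> C2" unfolding C2_def using al0 by simp
    define h where "h \<tau> = u \<tau> j + C2 * \<tau> powr \<alpha>" for \<tau>
    have hder: "(h has_real_derivative D j \<tau> + C2 * (\<alpha> * \<tau> powr (\<alpha> - 1))) (at \<tau>)" if "0 < \<tau>" for \<tau>
    proof -
      have "((\<lambda>s. s powr \<alpha>) has_real_derivative \<alpha> * \<tau> powr (\<alpha>-1)) (at \<tau>)"
        using that by (rule has_real_derivative_powr)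
      from DERIV_add[OF uder[OF that, of j] DERIV_cmult[OF this, of C2]]
      show ?thesis unfolding h_def[abs_def] by simp
    qed
    have hd0: "0 \<le> D j \<tau> + C2 * (\<alpha> * \<tau> powr (\<alpha> - 1))" if "0 < \<tau>" "\<tau> \<le> \<sigma>" for \<tau>
    proof -
      have pw: "((c/2) * \<tau> powr \<alpha>) powr \<beta> = (c/2) powr \<beta> * \<tau> powr (\<alpha> - 1)"
        unfolding powr_mult powr_powr alb by simp
      have nb: "u \<tau> i powr \<beta> \<le> (c/2) powr \<beta> * \<tau> powr (\<alpha> - 1)" for i
      proof -
        have "u \<tau> i powr \<beta> \<le> ((c/2) * \<tau> powr \<alpha>) powr \<beta>"
          using ulow[OF that, of i] beta c0 that by (intro powr_mono2') auto
        then show ?thesis unfolding pw .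
      qed
      have "0 < u \<tau> j powr \<beta>" using ubeta[of \<tau> j] that by simp
      then have "- 2 * ((c/2) powr \<beta> * \<tau> powr (\<alpha> - 1)) \<le> D j \<tau>"
        unfolding D_def using nb[of "j-1"] nb[of "j+1"] by linarith
      moreover have "C2 * (\<alpha> * \<tau> powr (\<alpha> - 1)) = 2 * ((c/2) powr \<beta> * \<tau> powr (\<alpha> - 1))"
        unfolding C2_def using al0 by (simp add: field_simps)
      ultimately show ?thesis by linarith
    qed
    have hmono: "h \<tau>0 \<le> h \<sigma>" if "0 < \<tau>0" "\<tau>0 \<le> \<sigma>" for \<tau>0
    proof (cases "\<tau>0 = \<sigma>")
      case True then show ?thesis by simp
    next
      case False
      then have lt: "\<tau>0 < \<sigma>" using that by simp
      have "\<And>z. \<tau>0 \<le> z \<Longrightarrow> z \<le> \<sigma> \<Longrightarrow> (h has_real_derivative D j z + C2 * (\<alpha> * z powr (\<alpha> - 1))) (at z)"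
        using that by (intro hder) auto
      from MVT2[OF lt this] obtain z where z: "\<tau>0 < z" "z < \<sigma>"
        "h \<sigma> - h \<tau>0 = (\<sigma> - \<tau>0) * (D j z + C2 * (\<alpha> * z powr (\<alpha> - 1)))" by blast
      have "0 \<le> (\<sigma> - \<tau>0) * (D j z + C2 * (\<alpha> * z powr (\<alpha> - 1)))"
        using hd0[of z] z that by (intro mult_nonneg_nonneg) auto
      then show ?thesis using z(3) by linarith
    qed
    have hd: "d \<le> h \<sigma>"
    proof (rule ccontr)
      assume nd: "\<not> d \<le> h \<sigma>"
      define \<epsilon>' where "\<epsilon>' = d - h \<sigma>"
      have ep: "0 < \<epsilon>'" unfolding \<epsilon>'_def using nd by simp
      obtain \<eta>1 where \<eta>1: "0 < \<eta>1" "\<forall>s\<ge>0. \<bar>s - 0\<bar> < \<eta>1 \<longrightarrow> supnorm (\<lambda>k. u s k - u 0 k) < \<epsilon>'"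
        using contz ep by blast
      define \<tau>0 where "\<tau>0 = min \<sigma> (\<eta>1/2)"
      have tau0: "0 < \<tau>0" "\<tau>0 \<le> \<sigma>" "\<tau>0 < \<eta>1" unfolding \<tau>0_def using sigpos \<eta>1 by auto
      have "supnorm (\<lambda>k. u \<tau>0 k - u 0 k) < \<epsilon>'" using \<eta>1(2) tau0 by auto
      moreover have "\<bar>u \<tau>0 j - u 0 j\<bar> \<le> supnorm (\<lambda>k. u \<tau>0 k - u 0 k)"
        using linf[of \<tau>0] linf[of 0] tau0 unfolding linf_plus_def by (intro sup_ge) auto
      ultimately have "w0 j - \<epsilon>' < u \<tau>0 j" using u0eq by (auto simp: abs_less_iff)
      moreover have "u \<tau>0 j \<le> h \<tau>0" unfolding h_def using C2pos by simp
      moreover have "h \<tau>0 \<le> h \<sigma>" using hmono tau0 by simp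
      ultimately show False using True unfolding \<epsilon>'_def by linarith
    qed
    have sp: "\<sigma> powr \<alpha> \<le> ts powr \<alpha>" using sigpos sigt tts al0 by (intro powr_mono2) auto
    have "C2 * \<sigma> powr \<alpha> \<le> C2 * ts powr \<alpha>" using sp C2pos by (intro mult_left_mono)
    also have "C2 * ts powr \<alpha> = 2 * (c/2) powr \<beta> * ts powr \<alpha> / \<alpha>" unfolding C2_def by simp
    finally have "C2 * \<sigma> powr \<alpha> \<le> d/2" using ts2 by linarith
    then have uj: "d/2 \<le> u \<sigma> j" using hd unfolding h_def by linarith
    have "w j \<sigma> \<le> c * (\<sigma> powr \<alpha> * F)" using wle sigpos by simp
    also have "\<dots> \<le> c * (ts powr \<alpha> * F)" using sp c0 F1 by (intro mult_left_mono mult_right_mono) auto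
    also have "\<dots> \<le> d/4" using ts1 by (simp add: mult.commute mult.left_commute)
    finally have "g j \<sigma> \<ge> d/4" using uj unfolding g_def by linarith
    then show False using gj e1(2) d0 by linarith
  next
    case False
    then have conc: "2*q j - q (j-1) - q (j+1) \<ge> 2*\<eta>" using qc by simp
    define X where "X = \<sigma> powr (\<alpha> - 1)"
    define Cb where "Cb = c powr \<beta>"
    have Xpos: "0 < X" unfolding X_def using sigpos by simp
    have Cbpos: "0 < Cb" unfolding Cb_def using c0 by simp
    have Wb: "w i \<sigma> powr \<beta> = Cb * X * q i" for i
      unfolding w_def powr_mult powr_powr alb fb X_def Cb_def by simp
    have Wmin: "wmin \<le> w i \<sigma>" for i
    proof -
      have "wmin \<le> c * \<sigma> powr \<alpha>" unfolding wmin_def using c0 aT sig Tpos al0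
        by (intro mult_left_mono powr_mono2) auto
      then show ?thesis using wge[of \<sigma> i] sigpos by simp
    qed
    have K_def': "K = -\<beta> * (wmin/2) powr (\<beta>-1)" by (rule K_def)
    have nb: "u \<sigma> i powr \<beta> \<le> w i \<sigma> powr \<beta> + K * e" for i
    proof (cases "w i \<sigma> \<le> u \<sigma> i")
      case True
      have "u \<sigma> i powr \<beta> \<le> w i \<sigma> powr \<beta>"
        using True Wmin[of i] wminpos beta by (intro powr_mono2') auto
      then show ?thesis using K0 e_pos by (simp add: add_increasing2)
    next
      case False
      have ge: "w i \<sigma> - e \<le> u \<sigma> i" using gall[of i] unfolding g_def by simp
      have m: "wmin/2 \<le> u \<sigma> i" using ge Wmin[of i] e1(1) by linarith
      have "u \<sigma> i powr \<beta> \<le> w i \<sigma> powr \<beta> + K * (w i \<sigma> - u \<sigma> i)"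
        unfolding K_def using powr_lip[of \<beta> "wmin/2" "u \<sigma> i" "w i \<sigma>"] False beta wminpos m by simp
      moreover have "K * (w i \<sigma> - u \<sigma> i) \<le> K * e" using K0 ge by (intro mult_left_mono) auto
      ultimately show ?thesis by linarith
    qed
    have cb: "w j \<sigma> powr \<beta> \<le> u \<sigma> j powr \<beta> + K * e"
    proof (cases "u \<sigma> j \<le> w j \<sigma>")
      case True
      have "w j \<sigma> powr \<beta> \<le> u \<sigma> j powr \<beta>"
        using True upos[of \<sigma> j] sigpos beta by (intro powr_mono2') auto
      then show ?thesis using K0 e_pos by (simp add: add_increasing2)
    next
      case False
      have le: "u \<sigma> j \<le> w j \<sigma> + e" using gj unfolding g_def by simp
      have m: "wmin/2 \<le> w j \<sigma>" using Wmin[of j] wminpos by linarith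
      have "w j \<sigma> powr \<beta> \<le> u \<sigma> j powr \<beta> + K * (u \<sigma> j - w j \<sigma>)"
        unfolding K_def using powr_lip[of \<beta> "wmin/2" "w j \<sigma>" "u \<sigma> j"] False beta wminpos m by simp
      moreover have "K * (u \<sigma> j - w j \<sigma>) \<le> K * e" using K0 le by (intro mult_left_mono) auto
      ultimately show ?thesis by linarith
    qed
    have D1: "Cb * X * (2*q j - q (j-1) - q (j+1)) - 4 * (K * e) \<le> D j \<sigma>"
      using nb[of "j-1"] nb[of "j+1"] cb unfolding D_def Wb by (simp add: algebra_simps)
    have D2: "Cb * X * (2*\<eta>) \<le> Cb * X * (2*q j - q (j-1) - q (j+1))"
      using conc Cbpos Xpos by (intro mult_left_mono) auto
    have W1: "w' j \<sigma> \<le> c * \<alpha> * F * X"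
    proof -
      have "\<alpha> * X * f j \<le> \<alpha> * X * F" using fF[of j] al0 Xpos by (intro mult_left_mono) auto
      then have "c * (\<alpha> * X * f j) \<le> c * (\<alpha> * X * F)" by (rule mult_left_mono) (use c0 in auto)
      then show ?thesis unfolding w'_def X_def by (simp add: ac_simps)
    qed
    have W2: "c * \<alpha> * F * X \<le> \<eta> * Cb * X" unfolding Cb_def using cF Xpos by (intro mult_right_mono) auto
    have Xt: "t powr (\<alpha> - 1) \<le> X" unfolding X_def using sigpos sigt al0 by (intro powr_mono2') auto
    have M1: "M \<le> \<eta> * Cb * X" unfolding M_def Cb_def using Xt eta0 c0
      by (simp add: mult.commute mult.left_commute mult_left_mono)
    have Ke: "K * e \<le> M/8"
    proof -
      have "K * e \<le> (K+1) * e" using e_pos by (simp add: algebra_simps)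
      also have "\<dots> \<le> (K+1) * (M/(8*(K+1)))" using e1(3) K0 by (intro mult_left_mono) auto
      also have "\<dots> = M/8" using K0 by (simp add: field_simps)
      finally show ?thesis .
    qed
    have "0 < D j \<sigma> - w' j \<sigma>"
      using D1 D2 W1 W2 M1 Ke Mpos by (simp add: algebra_simps)
    then show False using gneg by simp
  qed
qed


theorem lemmaA10:
  fixes \<beta> d :: real and L :: nat
  assumes "\<beta> < 0" and "d > 0"
  shows "\<exists>c t\<^sub>s. c > 0 \<and> t\<^sub>s > 0 \<and>
    (\<forall>u0 \<in> P_set L d. \<forall>\<delta>>0. \<forall>u.
       is_solution \<beta> (\<lambda>k. max (u0 k) \<delta>) u
       \<and> (\<forall>t\<ge>0. \<forall>k. \<delta> \<le> u t k \<and> u t k \<le> supnorm (\<lambda>k. max (u0 k) \<delta>))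
       \<longrightarrow> (\<forall>t. 0 \<le> t \<and> t \<le> t\<^sub>s \<longrightarrow> (\<forall>k. u t k \<ge> c * t powr (1 / (1 - \<beta>)))))"
proof -
  note beta = assms(1) and d0 = assms(2)
  define \<alpha> where "\<alpha> = 1/(1-\<beta>)"
  have om: "1 < 1 - \<beta>" using beta by simp
  have al0: "0 < \<alpha>" unfolding \<alpha>_def using om by simp
  define q0 :: real where "q0 = 1/2"
  define F where "F = q0 powr (1/\<beta>)"
  define \<eta> :: real where "\<eta> = 1/(2*(real L+1)^2)"
  have eta0: "0 < \<eta>" unfolding \<eta>_def by (simp add: add_pos_nonneg)
  have Fpos: "0 < F" unfolding F_def q0_def by simp
  define c where "c = (\<alpha>*F/\<eta>) powr (1/(\<beta>-1))"
  have c0: "0 < c" unfolding c_def using al0 Fpos eta0 by simp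
  have cpb: "c powr (\<beta>-1) = \<alpha>*F/\<eta>" unfolding c_def powr_powr using al0 Fpos eta0 beta by simp
  have "c powr \<beta> = c powr (1 + (\<beta>-1))" by simp
  also have "\<dots> = c * c powr (\<beta>-1)" unfolding powr_add using c0 by simp
  finally have "\<eta> * c powr \<beta> = c * \<alpha> * F" unfolding cpb using eta0 by (simp add: field_simps)
  then have cF: "c * \<alpha> * F \<le> \<eta> * c powr \<beta>" by simp
  define Mx where "Mx = min (d/(4*c*F)) (\<alpha>*d/(4*(c/2) powr \<beta>))"
  have Mxpos: "0 < Mx" unfolding Mx_def using d0 c0 Fpos al0 by simp
  define ts where "ts = Mx powr (1/\<alpha>)"
  have tspos: "0 < ts" unfolding ts_def using Mxpos by simp
  have tsa: "ts powr \<alpha> = Mx" unfolding ts_def powr_powr using al0 Mxpos by simp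
  have ts1: "c * F * ts powr \<alpha> \<le> d/4"
  proof -
    have "Mx \<le> d/(4*c*F)" unfolding Mx_def by simp
    then have "c * F * Mx \<le> c * F * (d/(4*c*F))" using c0 Fpos by (intro mult_left_mono) auto
    then show ?thesis unfolding tsa using c0 Fpos by simp
  qed
  have ts2: "2 * (c/2) powr \<beta> * ts powr \<alpha> / \<alpha> \<le> d/2"
  proof -
    have cb: "0 < (c/2) powr \<beta>" using c0 by simp
    have "Mx \<le> \<alpha>*d/(4*(c/2) powr \<beta>)" unfolding Mx_def by simp
    then have "2 * (c/2) powr \<beta> * Mx \<le> 2 * (c/2) powr \<beta> * (\<alpha>*d/(4*(c/2) powr \<beta>))"
      using cb by (intro mult_left_mono) auto
    also have "\<dots> = \<alpha> * (d/2)" using cb by (simp add: field_simps)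
    finally show ?thesis unfolding tsa using al0 by (simp add: divide_le_eq mult.commute)
  qed
  show ?thesis
  proof (intro exI conjI ballI allI impI)
    show "0 < c" by (rule c0)
    show "0 < ts" by (rule tspos)
  next
    fix u0 \<delta> u t k
    assume u0P: "u0 \<in> P_set L d" and del: "0 < \<delta>"
      and H: "is_solution \<beta> (\<lambda>k. max (u0 k) \<delta>) u
       \<and> (\<forall>t\<ge>0. \<forall>k. \<delta> \<le> u t k \<and> u t k \<le> supnorm (\<lambda>k. max (u0 k) \<delta>))"
      and tt: "0 \<le> t \<and> t \<le> ts"
    define w0 where "w0 = (\<lambda>k. max (u0 k) \<delta>)"
    have sol: "is_solution \<beta> w0 u" using H unfolding w0_def by blast
    have low: "\<forall>s\<ge>0. \<forall>k. \<delta> \<le> u s k" using H by blast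
    have site: "\<And>k. \<exists>l. k < l \<and> l \<le> k + int L \<and> d \<le> w0 l"
    proof -
      fix k
      obtain l where "k < l" "l \<le> k + int L" "d \<le> u0 l" using Pset_site[OF u0P] by blast
      then show "\<exists>l. k < l \<and> l \<le> k + int L \<and> d \<le> w0 l" unfolding w0_def by force
    qed
    obtain q :: "int \<Rightarrow> real" where qb: "\<forall>j. 1/2 \<le> q j \<and> q j \<le> 1"
      and qc0: "\<forall>j. \<not> d \<le> w0 j \<longrightarrow> 2 * q j - q (j-1) - q (j+1) \<ge> 2 * (1/(2*(real L+1)^2))"
      using profile[OF site] by blast
    have qc: "\<forall>j. w0 j < d \<longrightarrow> 2*q j - q (j-1) - q (j+1) \<ge> 2*\<eta>"
      using qc0 unfolding \<eta>_def by (auto simp: not_le)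
    show "c * t powr (1 / (1 - \<beta>)) \<le> u t k"
    proof (cases "t = 0")
      case True
      then show ?thesis using low del by (auto intro: order.trans[of _ \<delta>] less_imp_le)
    next
      case False
      then have t0: "0 < t" using tt by simp
      have core1: "c * (t powr \<alpha> * q k powr (1/\<beta>)) \<le> u t k"
        using core[OF beta \<alpha>_def d0 c0 eta0 _ F_def _ qc cF ts1 ts2 sol low del t0] tt qb
        unfolding q0_def by auto
      have qpos: "0 < q k" using qb by (meson less_le_trans half_gt_zero zero_less_one)
      have "1 powr (1/\<beta>) \<le> q k powr (1/\<beta>)" using qb qpos beta by (intro powr_mono2') auto
      then have q1: "1 \<le> q k powr (1/\<beta>)" by simp
      have "t powr \<alpha> * 1 \<le> t powr \<alpha> * q k powr (1/\<beta>)" using q1 by (intro mult_left_mono) auto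
      then have "c * t powr \<alpha> \<le> c * (t powr \<alpha> * q k powr (1/\<beta>))" using c0 by (intro mult_left_mono) auto
      then show ?thesis using core1 unfolding \<alpha>_def by linarith
    qed
  qed
qed

end
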